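(* Let $k\in\hat I$ and let $\nu,\mu$ be partitions such that $\mu$ is obtained from $\nu$ by adding one box $(x,y)$ of color $i$, i.e. with $k+x-y\equiv i\pmod n$. Then $v^{(k)}(\mu)-v^{(k)}(\nu)=-\overline{\alpha}_i$, where $(\overline\alpha_i)_j=2\delta^{(n)}_{i,j}-\delta^{(n)}_{i,j+1}-\delta^{(n)}_{i,j-1}$ for $j\in\hat I$.
   Context: Fix $n\ge3$ and $\hat I=\{0,\dots,n-1\}$ (residues mod $n$). Let $\delta^{(n)}_{i,j}=1$ if $i\equiv j\pmod n$ and $0$ otherwise. For a partition $\gamma$ with conjugate $\gamma'_y=|\{x:\gamma_x\ge y\}|$: - $(x,y)\in\mathbb Z_{\ge1}^2$ is a convex corner if $\gamma'_{y+1}<\gamma'_y=x$; - $(x,y)$ is a concave corner if $\gamma'_y=x-1$ and either $y=1$ or $\gamma'_{y-1}>x-1$. For $k,i\in\hat I$, $CC_i^{(k)}(\gamma)$ (resp. $CV_i^{(k)}(\gamma)$) is the set of concave (resp. convex) corners with $k+x-y\equiv i$. Set $v^{(k)}(\gamma)_i=|CC_i^{(k)}(\gamma)|-|CV_i^{(k)}(\gamma)|$, so $v^{(k)}(\gamma)\in\mathbb Z^n$. Boxes of $\gamma$ are the pairs $(x,y)$ with $\gamma_x\ge y$. *)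

theory Defs
  imports Main
begin

text \<open>A partition is represented as a function gamma :: nat => nat, where gamma x is the
  length of row x (x >= 1). Convention: gamma 0 = 0, rows weakly decreasing, finitely many
  nonzero rows.\<close>

definition is_partition :: "(nat \<Rightarrow> nat) \<Rightarrow> bool" where
  "is_partition g \<longleftrightarrow> g 0 = 0 \<and> (\<forall>x\<ge>1. g (Suc x) \<le> g x) \<and> finite {x. g x > 0}"

definition conj_part :: "(nat \<Rightarrow> nat) \<Rightarrow> nat \<Rightarrow> nat" where
  "conj_part g y = card {x. x \<ge> 1 \<and> g x \<ge> y}"

definition boxes :: "(nat \<Rightarrow> nat) \<Rightarrow> (nat \<times> nat) set" where
  "boxes g = {(x, y). x \<ge> 1 \<and> y \<ge> 1 \<and> g x \<ge> y}"

definition convex_corners :: "(nat \<Rightarrow> nat) \<Rightarrow> (nat \<times> nat) set" where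
  "convex_corners g = {(x, y). x \<ge> 1 \<and> y \<ge> 1 \<and>
      conj_part g (y + 1) < conj_part g y \<and> conj_part g y = x}"

definition concave_corners :: "(nat \<Rightarrow> nat) \<Rightarrow> (nat \<times> nat) set" where
  "concave_corners g = {(x, y). x \<ge> 1 \<and> y \<ge> 1 \<and>
      conj_part g y = x - 1 \<and> (y = 1 \<or> conj_part g (y - 1) > x - 1)}"

definition colour :: "nat \<Rightarrow> int \<Rightarrow> nat \<times> nat \<Rightarrow> int" where
  "colour n k p = (k + int (fst p) - int (snd p)) mod int n"

definition CC :: "nat \<Rightarrow> int \<Rightarrow> int \<Rightarrow> (nat \<Rightarrow> nat) \<Rightarrow> (nat \<times> nat) set" where
  "CC n k i g = {p \<in> concave_corners g. colour n k p = i mod int n}"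

definition CV :: "nat \<Rightarrow> int \<Rightarrow> int \<Rightarrow> (nat \<Rightarrow> nat) \<Rightarrow> (nat \<times> nat) set" where
  "CV n k i g = {p \<in> convex_corners g. colour n k p = i mod int n}"

definition vvec :: "nat \<Rightarrow> int \<Rightarrow> (nat \<Rightarrow> nat) \<Rightarrow> int \<Rightarrow> int" where
  "vvec n k g i = int (card (CC n k i g)) - int (card (CV n k i g))"

definition delta_n :: "nat \<Rightarrow> int \<Rightarrow> int \<Rightarrow> int" where
  "delta_n n i j = (if i mod int n = j mod int n then 1 else 0)"

definition alpha_bar :: "nat \<Rightarrow> int \<Rightarrow> int \<Rightarrow> int" where
  "alpha_bar n i j = 2 * delta_n n i j - delta_n n i (j + 1) - delta_n n i (j - 1)"

end

theory Submission imports Defs begin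

lemma part_mono:
  assumes P: "is_partition g" and a: "1 \<le> a" and ab: "a \<le> b"
  shows "g b \<le> g a"
  using ab
proof (induction b rule: dec_induct)
  case base then show ?case by simp
next
  case (step m)
  have "g (Suc m) \<le> g m" using P step(1) a unfolding is_partition_def by auto
  then show ?case using step(3) by simp
qed

lemma part_eventually_zero:
  assumes "is_partition g" shows "\<exists>N. g (Suc N) = 0"
proof -
  have "finite {x. g x > 0}" using assms unfolding is_partition_def by blast
  then obtain N where "\<forall>x\<in>{x. g x > 0}. x < N" using finite_nat_set_iff_bounded by blast
  then show ?thesis by (intro exI[of _ N]) auto
qed

lemma conj_ge:
  assumes P: "is_partition g" and y: "1 \<le> y" and a: "1 \<le> a"
  shows "a \<le> conj_part g y \<longleftrightarrow> y \<le> g a"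
proof -
  define m where "m = (LEAST m. g (Suc m) < y)"
  obtain N where N: "g (Suc N) = 0" using part_eventually_zero[OF P] by blast
  have ex: "\<exists>m. g (Suc m) < y" using N y by (intro exI[of _ N]) simp
  have m1: "g (Suc m) < y" unfolding m_def by (rule LeastI_ex[OF ex])
  have m2: "m = 0 \<or> y \<le> g m"
  proof (cases m)
    case 0 then show ?thesis by simp
  next
    case (Suc p)
    have "p < (LEAST m. g (Suc m) < y)" using Suc m_def by simp
    then have "\<not> g (Suc p) < y" by (rule not_less_Least)
    then show ?thesis using Suc by simp
  qed
  have S: "{x. x \<ge> 1 \<and> g x \<ge> y} = {1..m}"
  proof (intro set_eqI iffI)
    fix z assume "z \<in> {x. x \<ge> 1 \<and> g x \<ge> y}"
    then have z: "1 \<le> z" "y \<le> g z" by auto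
    show "z \<in> {1..m}"
    proof (rule ccontr)
      assume "z \<notin> {1..m}"
      then have "Suc m \<le> z" using z by auto
      then have "g z \<le> g (Suc m)" using part_mono[OF P] by simp
      then show False using z m1 by simp
    qed
  next
    fix z assume "z \<in> {1..m}"
    then have "1 \<le> z" "z \<le> m" by auto
    then show "z \<in> {x. x \<ge> 1 \<and> g x \<ge> y}" using part_mono[OF P, of z m] m2 by auto
  qed
  have c: "conj_part g y = m" unfolding conj_part_def S by simp
  have "a \<in> {x. x \<ge> 1 \<and> g x \<ge> y} \<longleftrightarrow> a \<in> {1..m}" by (simp only: S)
  then show ?thesis using a c by auto
qed

lemma convex_char:
  assumes P: "is_partition g"
  shows "convex_corners g = {(a,b). 1 \<le> a \<and> 1 \<le> b \<and> g a = b \<and> g (Suc a) < b}"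
proof (intro set_eqI)
  fix p :: "nat \<times> nat"
  obtain a b where p: "p = (a,b)" by (cases p)
  show "p \<in> convex_corners g \<longleftrightarrow> p \<in> {(a,b). 1 \<le> a \<and> 1 \<le> b \<and> g a = b \<and> g (Suc a) < b}"
  proof (cases "1 \<le> a \<and> 1 \<le> b")
    case True
    have e1: "conj_part g b = a \<longleftrightarrow> a \<le> conj_part g b \<and> \<not> Suc a \<le> conj_part g b" by auto
    have e2: "conj_part g (b+1) < a \<longleftrightarrow> \<not> a \<le> conj_part g (b+1)" by auto
    have "p \<in> convex_corners g \<longleftrightarrow> conj_part g (b+1) < a \<and> conj_part g b = a"
      using True by (auto simp: p convex_corners_def)
    also have "\<dots> \<longleftrightarrow> \<not> (b+1 \<le> g a) \<and> (b \<le> g a \<and> \<not> b \<le> g (Suc a))"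
      using e1 e2 conj_ge[OF P, of b a] conj_ge[OF P, of b "Suc a"] conj_ge[OF P, of "b+1" a] True
      by simp
    also have "\<dots> \<longleftrightarrow> p \<in> {(a,b). 1 \<le> a \<and> 1 \<le> b \<and> g a = b \<and> g (Suc a) < b}"
      using True by (auto simp: p)
    finally show ?thesis .
  next
    case False then show ?thesis unfolding p convex_corners_def by auto
  qed
qed

lemma concave_char:
  assumes P: "is_partition g"
  shows "concave_corners g = {(a,b). 1 \<le> a \<and> 1 \<le> b \<and> g a = b - 1 \<and> (a = 1 \<or> b \<le> g (a - 1))}"
proof (intro set_eqI)
  fix p :: "nat \<times> nat"
  obtain a b where p: "p = (a,b)" by (cases p)
  show "p \<in> concave_corners g \<longleftrightarrow> p \<in> {(a,b). 1 \<le> a \<and> 1 \<le> b \<and> g a = b - 1 \<and> (a = 1 \<or> b \<le> g (a - 1))}"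
  proof (cases "1 \<le> a \<and> 1 \<le> b")
    case True
    have e1: "conj_part g b = a - 1 \<longleftrightarrow> (a = 1 \<or> a - 1 \<le> conj_part g b) \<and> \<not> a \<le> conj_part g b"
      using True by auto
    have e2: "(b = 1 \<or> conj_part g (b - 1) > a - 1) \<longleftrightarrow> (b = 1 \<or> a \<le> conj_part g (b - 1))"
      using True by auto
    have e3: "a = 1 \<or> a - 1 \<le> conj_part g b \<longleftrightarrow> a = 1 \<or> b \<le> g (a - 1)"
      using conj_ge[OF P, of b "a - 1"] True by (cases "a = 1") auto
    have e4: "(b = 1 \<or> a \<le> conj_part g (b - 1)) \<longleftrightarrow> (b = 1 \<or> b - 1 \<le> g a)"
      using conj_ge[OF P, of "b - 1" a] True by (cases "b = 1") auto
    have e5: "a \<le> conj_part g b \<longleftrightarrow> b \<le> g a" using conj_ge[OF P, of b a] True by simp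
    have "p \<in> concave_corners g \<longleftrightarrow> conj_part g b = a - 1 \<and> (b = 1 \<or> conj_part g (b - 1) > a - 1)"
      using True by (auto simp: p concave_corners_def)
    also have "\<dots> \<longleftrightarrow> (a = 1 \<or> b \<le> g (a - 1)) \<and> \<not> b \<le> g a \<and> (b = 1 \<or> b - 1 \<le> g a)"
      using e1 e2 e3 e4 e5 by simp
    also have "\<dots> \<longleftrightarrow> p \<in> {(a,b). 1 \<le> a \<and> 1 \<le> b \<and> g a = b - 1 \<and> (a = 1 \<or> b \<le> g (a - 1))}"
      using True by (auto simp: p)
    finally show ?thesis .
  next
    case False then show ?thesis unfolding p concave_corners_def by auto
  qed
qed

definition CVr :: "nat \<Rightarrow> int \<Rightarrow> int \<Rightarrow> (nat \<Rightarrow> nat) \<Rightarrow> nat set" where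
  "CVr n k j g = {a. 1 \<le> a \<and> 1 \<le> g a \<and> g (Suc a) < g a \<and> colour n k (a, g a) = j mod int n}"

definition CCr :: "nat \<Rightarrow> int \<Rightarrow> int \<Rightarrow> (nat \<Rightarrow> nat) \<Rightarrow> nat set" where
  "CCr n k j g = {a. 1 \<le> a \<and> (a = 1 \<or> g a < g (a - 1)) \<and> colour n k (a, Suc (g a)) = j mod int n}"

lemma card_CV:
  assumes P: "is_partition g"
  shows "card (CV n k j g) = card (CVr n k j g)"
proof -
  have "CV n k j g = (\<lambda>a. (a, g a)) ` CVr n k j g"
    by (auto simp: CV_def CVr_def convex_char[OF P] image_iff)
  moreover have "inj_on (\<lambda>a. (a, g a)) (CVr n k j g)" by (auto simp: inj_on_def)
  ultimately show ?thesis by (simp add: card_image)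
qed

lemma card_CC:
  assumes P: "is_partition g"
  shows "card (CC n k j g) = card (CCr n k j g)"
proof -
  have "CC n k j g = (\<lambda>a. (a, Suc (g a))) ` CCr n k j g"
    by (auto simp: CC_def CCr_def concave_char[OF P] image_iff)
  moreover have "inj_on (\<lambda>a. (a, Suc (g a))) (CCr n k j g)" by (auto simp: inj_on_def)
  ultimately show ?thesis by (simp add: card_image)
qed

lemma fin_CVr:
  assumes P: "is_partition g" shows "finite (CVr n k j g)"
proof -
  have "finite {x. g x > 0}" using P unfolding is_partition_def by blast
  moreover have "CVr n k j g \<subseteq> {x. g x > 0}" by (auto simp: CVr_def)
  ultimately show ?thesis by (rule finite_subset[rotated])
qed

lemma fin_CCr:
  assumes P: "is_partition g" shows "finite (CCr n k j g)"
proof -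
  have "finite {x. g x > 0}" using P unfolding is_partition_def by blast
  then have "finite (insert 1 (Suc ` {x. g x > 0}))" by simp
  moreover have "CCr n k j g \<subseteq> insert 1 (Suc ` {x. g x > 0})"
  proof
    fix a assume a: "a \<in> CCr n k j g"
    show "a \<in> insert 1 (Suc ` {x. g x > 0})"
    proof (cases "a = 1")
      case False
      then have "g a < g (a - 1)" "1 \<le> a" using a by (auto simp: CCr_def)
      then have "a = Suc (a - 1)" "g (a - 1) > 0" using False by auto
      then show ?thesis by blast
    qed simp
  qed
  ultimately show ?thesis by (rule finite_subset[rotated])
qed

lemma card_diff_local:
  assumes "finite A" "finite B" "finite F" "A - F = B - F"
  shows "int (card A) - int (card B) = (\<Sum>a\<in>F. of_bool (a \<in> A) - of_bool (a \<in> B))"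
proof -
  have "card A = card (A - F) + card (A \<inter> F)"
    using assms(1) by (metis Diff_Diff_Int Int_commute card_Diff_subset_Int card_mono Int_lower1 finite_Int le_add_diff_inverse2 Diff_subset card_Diff_subset)
  moreover have "card B = card (B - F) + card (B \<inter> F)"
    using assms(2) by (metis Diff_Diff_Int Int_commute card_Diff_subset_Int card_mono Int_lower1 finite_Int le_add_diff_inverse2 Diff_subset card_Diff_subset)
  moreover have "(\<Sum>a\<in>F. of_bool (a \<in> A) - of_bool (a \<in> B)) = int (card (F \<inter> {a. a \<in> A})) - int (card (F \<inter> {a. a \<in> B}))"
    using assms(3) by (simp add: sum_subtractf)
  moreover have "F \<inter> {a. a \<in> A} = A \<inter> F" "F \<inter> {a. a \<in> B} = B \<inter> F" by auto
  ultimately show ?thesis using assms(4) by simp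
qed

theorem mainTheorem11:
  fixes n :: nat and k i :: int and nu mu :: "nat \<Rightarrow> nat" and x y :: nat
  assumes "n \<ge> 3"
    and "k \<in> {0..<int n}" and "i \<in> {0..<int n}"
    and "is_partition nu" and "is_partition mu"
    and "(x, y) \<notin> boxes nu"
    and "boxes mu = insert (x, y) (boxes nu)"
    and "(k + int x - int y) mod int n = i"
  shows "\<forall>j \<in> {0..<int n}. vvec n k mu j - vvec n k nu j = - alpha_bar n i j"
proof
  fix j assume j: "j \<in> {0..<int n}"
  note Pn = assms(4) and Pm = assms(5) and B = assms(7)
  have xy: "1 \<le> x" "1 \<le> y" "y \<le> mu x" using B by (auto simp: boxes_def)
  have nx: "nu x < y" using assms(6) xy by (auto simp: boxes_def)
  have bm: "\<And>a b. 1 \<le> a \<Longrightarrow> 1 \<le> b \<Longrightarrow> b \<le> mu a \<longleftrightarrow> b \<le> nu a \<or> (a, b) = (x, y)"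
  proof -
    fix a b :: nat assume "1 \<le> a" "1 \<le> b"
    have "(a,b) \<in> boxes mu \<longleftrightarrow> (a,b) \<in> insert (x, y) (boxes nu)" using B by simp
    then show "b \<le> mu a \<longleftrightarrow> b \<le> nu a \<or> (a, b) = (x, y)" using \<open>1 \<le> a\<close> \<open>1 \<le> b\<close> by (auto simp: boxes_def)
  qed
  have mux: "mu x = y"
  proof (rule ccontr)
    assume "mu x \<noteq> y"
    then have "y < mu x" using xy by simp
    then show False using bm[of x "mu x"] xy nx by auto
  qed
  have nux: "nu x = y - 1"
  proof (rule ccontr)
    assume "nu x \<noteq> y - 1"
    then have "nu x < y - 1" using nx by simp
    then show False using bm[of x "y - 1"] xy mux by auto
  qed
  have other: "\<And>a. a \<noteq> x \<Longrightarrow> mu a = nu a"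
  proof -
    fix a assume ax: "a \<noteq> x"
    show "mu a = nu a"
    proof (cases "a = 0")
      case True then show ?thesis using Pn Pm by (simp add: is_partition_def)
    next
      case False
      then have a1: "1 \<le> a" by simp
      show ?thesis
      proof (rule ccontr)
        assume "mu a \<noteq> nu a"
        then consider "mu a < nu a" | "nu a < mu a" by linarith
        then show False
        proof cases
          case 1 then show False using bm[OF a1, of "nu a"] ax by auto
        next
          case 2 then show False using bm[OF a1, of "mu a"] ax by auto
        qed
      qed
    qed
  qed
  have mu_eq: "mu = nu(x := y)" using other mux by (auto simp: fun_eq_iff)
  have nsx: "nu (Suc x) \<le> y - 1" using part_mono[OF Pn, of x "Suc x"] xy nux by simp
  have npx: "x \<ge> 2 \<Longrightarrow> y \<le> nu (x - 1)"
    using part_mono[OF Pm, of "x - 1" x] xy mux other[of "x - 1"] by simp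
  have vv: "vvec n k g j = int (card (CCr n k j g)) - int (card (CVr n k j g))" if "is_partition g" for g
    using that by (simp add: vvec_def card_CC card_CV)
  have dCC: "int (card (CCr n k j mu)) - int (card (CCr n k j nu)) =
     (of_bool (x \<in> CCr n k j mu) - of_bool (x \<in> CCr n k j nu)) +
     (of_bool (Suc x \<in> CCr n k j mu) - of_bool (Suc x \<in> CCr n k j nu))"
  proof -
    have "CCr n k j mu - {x, Suc x} = CCr n k j nu - {x, Suc x}"
      unfolding CCr_def mu_eq by auto
    from card_diff_local[OF fin_CCr[OF Pm] fin_CCr[OF Pn] _ this] show ?thesis by simp
  qed
  have dCV: "int (card (CVr n k j mu)) - int (card (CVr n k j nu)) =
     (of_bool (x - 1 \<in> CVr n k j mu) - of_bool (x - 1 \<in> CVr n k j nu)) +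
     (of_bool (x \<in> CVr n k j mu) - of_bool (x \<in> CVr n k j nu))"
  proof -
    have "CVr n k j mu - {x - 1, x} = CVr n k j nu - {x - 1, x}"
      unfolding CVr_def mu_eq by auto
    from card_diff_local[OF fin_CVr[OF Pm] fin_CVr[OF Pn] _ this] show ?thesis using xy by simp
  qed
  define e where "e = k + int x - int y"
  have jm: "j mod int n = j" using j by simp
  have col: "\<And>a b. colour n k (a, b) = j mod int n \<longleftrightarrow> int n dvd (k + int a - int b - j)"
    by (simp add: colour_def mod_eq_dvd_iff)
  have r1: "x \<in> CCr n k j mu \<longleftrightarrow> (x = 1 \<or> y < nu (x - 1)) \<and> int n dvd (e - 1 - j)"
    unfolding CCr_def col e_def mu_eq using xy by (auto simp: algebra_simps)
  have r2: "x \<in> CCr n k j nu \<longleftrightarrow> int n dvd (e - j)"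
    unfolding CCr_def col e_def using xy nux npx by (cases "x \<ge> 2") (auto simp: algebra_simps)
  define D3 where "D3 = (int n dvd (k + int (Suc x) - int (Suc (nu (Suc x))) - j))"
  define D5 where "D5 = (int n dvd (k + int (x - 1) - int (nu (x - 1)) - j))"
  have r3: "Suc x \<in> CCr n k j mu \<longleftrightarrow> D3"
    unfolding CCr_def col D3_def mu_eq using xy nsx by auto
  have r4: "Suc x \<in> CCr n k j nu \<longleftrightarrow> nu (Suc x) < y - 1 \<and> D3"
    unfolding CCr_def col D3_def using xy nux by auto
  have r5: "x - 1 \<in> CVr n k j mu \<longleftrightarrow> x \<ge> 2 \<and> y < nu (x - 1) \<and> D5"
    unfolding CVr_def col D5_def mu_eq using xy npx by (cases "x \<ge> 2") auto
  have r6: "x - 1 \<in> CVr n k j nu \<longleftrightarrow> x \<ge> 2 \<and> D5"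
    unfolding CVr_def col D5_def using xy npx nux by (cases "x \<ge> 2") auto
  have r7: "x \<in> CVr n k j mu \<longleftrightarrow> int n dvd (e - j)"
    unfolding CVr_def col e_def mu_eq using xy nsx by (auto simp: algebra_simps)
  have r8: "x \<in> CVr n k j nu \<longleftrightarrow> nu (Suc x) < y - 1 \<and> int n dvd (e + 1 - j)"
    unfolding CVr_def col e_def using xy nux by (auto simp: algebra_simps)
  have c5: "x \<ge> 2 \<Longrightarrow> \<not> y < nu (x - 1) \<Longrightarrow> D5 \<longleftrightarrow> int n dvd (e - 1 - j)"
    unfolding D5_def e_def using npx by (auto simp: algebra_simps)
  have c3: "\<not> nu (Suc x) < y - 1 \<Longrightarrow> D3 \<longleftrightarrow> int n dvd (e + 1 - j)"
    unfolding D3_def e_def using nsx xy by (auto simp: algebra_simps)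
  have ie: "i mod int n = e mod int n" using assms(3,8) e_def by simp
  have d0: "delta_n n i j = of_bool (int n dvd (e - j))"
    unfolding delta_n_def ie by (simp add: mod_eq_dvd_iff)
  have d1: "delta_n n i (j + 1) = of_bool (int n dvd (e - 1 - j))"
    unfolding delta_n_def ie by (simp add: mod_eq_dvd_iff algebra_simps)
  have d2: "delta_n n i (j - 1) = of_bool (int n dvd (e + 1 - j))"
    unfolding delta_n_def ie by (simp add: mod_eq_dvd_iff algebra_simps)
  have A: "(of_bool (x \<in> CCr n k j mu) - of_bool (x \<in> CCr n k j nu))
        - (of_bool (x - 1 \<in> CVr n k j mu) - of_bool (x - 1 \<in> CVr n k j nu))
        = (of_bool (int n dvd (e - 1 - j)) - of_bool (int n dvd (e - j)) :: int)"
    unfolding r1 r2 r5 r6 using c5 xy by (cases "x \<ge> 2"; cases "y < nu (x - 1)") auto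
  have Bq: "(of_bool (Suc x \<in> CCr n k j mu) - of_bool (Suc x \<in> CCr n k j nu))
        - (of_bool (x \<in> CVr n k j mu) - of_bool (x \<in> CVr n k j nu))
        = (of_bool (int n dvd (e + 1 - j)) - of_bool (int n dvd (e - j)) :: int)"
    unfolding r3 r4 r7 r8 using c3 by (cases "nu (Suc x) < y - 1") auto
  have "vvec n k mu j - vvec n k nu j
     = (int (card (CCr n k j mu)) - int (card (CCr n k j nu))) - (int (card (CVr n k j mu)) - int (card (CVr n k j nu)))"
    unfolding vv[OF Pm] vv[OF Pn] by simp
  also have "\<dots> = - alpha_bar n i j"
    unfolding dCC dCV alpha_bar_def d0 d1 d2 using A Bq by simp
  finally show "vvec n k mu j - vvec n k nu j = - alpha_bar n i j" .
qed

end
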